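(* For every DBI normal formula $\varphi$ and every pointed Kripke model $(\mathcal{M},v)$, the pointed update of $(\mathcal{M},v)$ with $(\mathcal{U}_\varphi,0)$ is defined and $\mathcal{M}\odot\mathcal{U}_\varphi,(v,0)\vDash\varphi$.
   Context: Agents $\mathcal{A}=\{1,\dots,n\}$, $n>1$; language $\mathcal{L}$: $\varphi ::= p \mid \neg\varphi \mid (\varphi\wedge\varphi)\mid B_i\varphi$, with $\top$ the usual tautology. Kripke model $\mathcal{M}=\langle S,R,V\rangle$ (nonempty $S$, $R_i\subseteq S\times S$, $V:\mathit{Prop}\to 2^S$), standard truth ($\mathcal{M},w\vDash B_i\varphi$ iff $\varphi$ holds at all $R_i$-successors). Action model $\mathcal{U}=\langle E,Q,\mathsf{pre}\rangle$ (nonempty $E$, $Q_i\subseteq E\times E$, $\mathsf{pre}:E\to\mathcal{L}$). Pointed update of $(\mathcal{M},w)$ with $(\mathcal{U},\alpha)$, defined iff $\mathcal{M},w\vDash\mathsf{pre}(\alpha)$: with $T=\{(x,\beta)\in S\times E\mid\mathcal{M},x\vDash\mathsf{pre}(\beta)\}$, $\mathcal{M}\odot\mathcal{U}=\langle S^{\mathcal U},R^{\mathcal U},V^{\mathcal U}\rangle$, where $S^{\mathcal U}$ is the smallest subset of $T$ containing $(w,\alpha)$ closed under: $(x,\beta)\in S^{\mathcal U}$, $(u,\gamma)\in T$, $xR_iu$, $\beta Q_i\gamma$ imply $(u,\gamma)\in S^{\mathcal U}$; $R^{\mathcal U}_i$ relates $(x,\beta),(u,\gamma)\in S^{\mathcal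 U}$ iff $xR_iu$ and $\beta Q_i\gamma$; $V^{\mathcal U}(p)=\{(x,\beta)\in S^{\mathcal U}\mid x\in V(p)\}$. The resulting pointed model is $(\mathcal{M}\odot\mathcal{U},(w,\alpha))$. Target agents: $\mathsf{ta}(p)=\varnothing$, $\mathsf{ta}(\neg\phi)=\mathsf{ta}(\phi)$, $\mathsf{ta}(\phi\wedge\psi)=\mathsf{ta}(\phi)\cup\mathsf{ta}(\psi)$, $\mathsf{ta}(B_i\phi)=\{i\}$. DBI formulas: $\varphi ::= B_i\xi \mid B_i(\xi\wedge\varphi)\mid(\varphi\wedge\varphi)\mid B_i\varphi$ with $\xi$ purely propositional. DBI normal: $B_i\xi$ always; $B_i\varphi$ and $B_i(\xi\wedge\varphi)$ iff $\varphi$ is DBI normal and $i\notin\mathsf{ta}(\varphi)$; $\varphi\wedge\psi$ iff both are DBI normal and $\mathsf{ta}(\varphi)\cap\mathsf{ta}(\psi)=\varnothing$. The action model $\mathcal{U}_\varphi=\langle E^\varphi,Q^\varphi,\mathsf{pre}^\varphi\rangle$ for DBI normal $\varphi$ is defined recursively; always $E^\varphi=\{0,-1\}\sqcup D^\varphi$ with $\varnothing\neq D^\varphi\subseteq\{1,2,\dots\}$, $\mathsf{pre}^\varphi(0)=\mathsf{pre}^\varphi(-1)=\top$. For a relation $Q_j$ write $\underline{Q}_j=Q_j\cap((E\setminus\{0\})\times(E\setminus\{0\}))$. (1) $\varphi=B_i\xi$, $\xi$ propositional: $D^\varphi=\{m\}$, $\mathsf{pre}(m)=\xi$, $Q_j=\{(0,-1),(m,-1),(-1,-1)\}$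 for $j\neq i$, $Q_i=\{(0,m),(m,m),(-1,-1)\}$. (2) $\varphi=B_i\psi$, $\psi$ DBI normal: with a fresh $m\geq1$, $m\notin D^\psi$, let $D^\varphi=D^\psi\sqcup\{m\}$, $\mathsf{pre}^\varphi$ extends $\mathsf{pre}^\psi$ by $\mathsf{pre}^\varphi(m)=\top$, $Q^\varphi_j=\underline{Q}^\psi_j\cup\{(0,-1)\}\cup\{(m,k)\mid(0,k)\in Q^\psi_j\}$ for $j\neq i$, and $Q^\varphi_i=\underline{Q}^\psi_i\cup\{(0,m),(m,m)\}$. (3) $\varphi=B_i(\xi\wedge\psi)$, $\xi$ propositional, $\psi$ DBI normal: as in (2) except $\mathsf{pre}^\varphi(m)=\xi$. (4) $\varphi=\psi\wedge\theta$ with $\psi,\theta$ DBI normal: rename so that $D^\psi\cap D^\theta=\varnothing$; $D^\varphi=D^\psi\sqcup D^\theta$, $\mathsf{pre}^\varphi=\mathsf{pre}^\psi\cup\mathsf{pre}^\theta$, and for every $j$: $Q^\varphi_j=\underline{Q}^\psi_j\cup\underline{Q}^\theta_j\cup\{(0,k)\mid (0,k)\in Q^\psi_j\cup Q^\theta_j,\ k\in D^\psi\sqcup D^\theta\}\cup\{(0,-1)\mid \text{there is no } k\in D^\psi\sqcup D^\theta \text{ with } (0,k)\in Q^\psi_j\cup Q^\theta_j\}$. *)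

theory Defs
  imports Main "HOL-Library.Cardinality"
begin

datatype ('ag, 'p) fm =
    Atom 'p
  | Neg "('ag, 'p) fm"
  | Conj "('ag, 'p) fm" "('ag, 'p) fm"
  | Bel 'ag "('ag, 'p) fm"

definition top :: "('ag, 'p) fm" where
  "top = Neg (Conj (Atom undefined) (Neg (Atom undefined)))"

primrec propositional :: "('ag, 'p) fm \<Rightarrow> bool" where
  "propositional (Atom p) = True"
| "propositional (Neg f) = propositional f"
| "propositional (Conj f g) = (propositional f \<and> propositional g)"
| "propositional (Bel i f) = False"

primrec ta :: "('ag, 'p) fm \<Rightarrow> 'ag set" where
  "ta (Atom p) = {}"
| "ta (Neg f) = ta f"
| "ta (Conj f g) = ta f \<union> ta g"
| "ta (Bel i f) = {i}"

inductive dbi_normal :: "('ag, 'p) fm \<Rightarrow> bool" where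
  nprop: "propositional \<xi> \<Longrightarrow> dbi_normal (Bel i \<xi>)"
| bel: "dbi_normal \<phi> \<Longrightarrow> i \<notin> ta \<phi> \<Longrightarrow> dbi_normal (Bel i \<phi>)"
| belc: "propositional \<xi> \<Longrightarrow> dbi_normal \<phi> \<Longrightarrow> i \<notin> ta \<phi>
          \<Longrightarrow> dbi_normal (Bel i (Conj \<xi> \<phi>))"
| conj: "dbi_normal \<phi> \<Longrightarrow> dbi_normal \<psi> \<Longrightarrow> ta \<phi> \<inter> ta \<psi> = {}
          \<Longrightarrow> dbi_normal (Conj \<phi> \<psi>)"

record ('ag, 's, 'p) kmodel =
  St :: "'s set"
  Rel :: "'ag \<Rightarrow> ('s \<times> 's) set"
  Val :: "'p \<Rightarrow> 's set"

definition kripke :: "('ag, 's, 'p) kmodel \<Rightarrow> bool" where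
  "kripke M \<longleftrightarrow> St M \<noteq> {} \<and> (\<forall>i. Rel M i \<subseteq> St M \<times> St M) \<and> (\<forall>p. Val M p \<subseteq> St M)"

primrec sat :: "('ag, 's, 'p) kmodel \<Rightarrow> 's \<Rightarrow> ('ag, 'p) fm \<Rightarrow> bool" where
  "sat M w (Atom p) = (w \<in> Val M p)"
| "sat M w (Neg f) = (\<not> sat M w f)"
| "sat M w (Conj f g) = (sat M w f \<and> sat M w g)"
| "sat M w (Bel i f) = (\<forall>u. (w, u) \<in> Rel M i \<longrightarrow> sat M u f)"

record ('ag, 'e, 'p) amodel =
  AE :: "'e set"
  AQ :: "'ag \<Rightarrow> ('e \<times> 'e) set"
  Apre :: "'e \<Rightarrow> ('ag, 'p) fm"

definition upd_T :: "('ag, 's, 'p) kmodel \<Rightarrow> ('ag, 'e, 'p) amodel \<Rightarrow> ('s \<times> 'e) set" where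
  "upd_T M U = {(x, \<beta>). x \<in> St M \<and> \<beta> \<in> AE U \<and> sat M x (Apre U \<beta>)}"

inductive_set upd_states :: "('ag, 's, 'p) kmodel \<Rightarrow> ('ag, 'e, 'p) amodel \<Rightarrow> 's \<Rightarrow> 'e
    \<Rightarrow> ('s \<times> 'e) set"
  for M U w \<alpha> where
  base: "(w, \<alpha>) \<in> upd_T M U \<Longrightarrow> (w, \<alpha>) \<in> upd_states M U w \<alpha>"
| step: "(x, \<beta>) \<in> upd_states M U w \<alpha> \<Longrightarrow> (u, \<gamma>) \<in> upd_T M U \<Longrightarrow> (x, u) \<in> Rel M i
          \<Longrightarrow> (\<beta>, \<gamma>) \<in> AQ U i \<Longrightarrow> (u, \<gamma>) \<in> upd_states M U w \<alpha>"

definition upd_defined :: "('ag, 's, 'p) kmodel \<Rightarrow> ('ag, 'e, 'p) amodel \<Rightarrow> 's \<Rightarrow> 'e \<Rightarrow> bool" where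
  "upd_defined M U w \<alpha> \<longleftrightarrow> sat M w (Apre U \<alpha>)"

definition upd :: "('ag, 's, 'p) kmodel \<Rightarrow> ('ag, 'e, 'p) amodel \<Rightarrow> 's \<Rightarrow> 'e
    \<Rightarrow> ('ag, 's \<times> 'e, 'p) kmodel" where
  "upd M U w \<alpha> =
    \<lparr> St = upd_states M U w \<alpha>,
      Rel = (\<lambda>i. {((x, \<beta>), (u, \<gamma>)). (x, \<beta>) \<in> upd_states M U w \<alpha> \<and> (u, \<gamma>) \<in> upd_states M U w \<alpha>
                    \<and> (x, u) \<in> Rel M i \<and> (\<beta>, \<gamma>) \<in> AQ U i}),
      Val = (\<lambda>p. {(x, \<beta>). (x, \<beta>) \<in> upd_states M U w \<alpha> \<and> x \<in> Val M p}) \<rparr>"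

definition under :: "(int \<times> int) set \<Rightarrow> (int \<times> int) set" where
  "under Q = Q \<inter> ({k. k \<noteq> 0} \<times> {k. k \<noteq> 0})"

text \<open>mkU phi D Q pre: (E = {0,-1} \<union> D, Q, pre) is an admissible U_phi
  (all admissible choices of fresh event names are allowed).\<close>
inductive mkU :: "('ag, 'p) fm \<Rightarrow> int set \<Rightarrow> ('ag \<Rightarrow> (int \<times> int) set) \<Rightarrow> (int \<Rightarrow> ('ag, 'p) fm)
    \<Rightarrow> bool" where
  ubase: "propositional \<xi> \<Longrightarrow> m \<ge> 1 \<Longrightarrow>
    mkU (Bel i \<xi>) {m}
      (\<lambda>j. if j = i then {(0, m), (m, m), (-1, -1)} else {(0, -1), (m, -1), (-1, -1)})
      ((\<lambda>_. top)(m := \<xi>))"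
| bel: "dbi_normal \<psi> \<Longrightarrow> mkU \<psi> D Q P \<Longrightarrow> m \<ge> 1 \<Longrightarrow> m \<notin> D \<Longrightarrow>
    mkU (Bel i \<psi>) (insert m D)
      (\<lambda>j. if j = i then under (Q i) \<union> {(0, m), (m, m)}
           else under (Q j) \<union> {(0, -1)} \<union> {(m, k) | k. (0, k) \<in> Q j})
      (P(m := top))"
| belc: "propositional \<xi> \<Longrightarrow> dbi_normal \<psi> \<Longrightarrow> mkU \<psi> D Q P \<Longrightarrow> m \<ge> 1 \<Longrightarrow> m \<notin> D \<Longrightarrow>
    mkU (Bel i (Conj \<xi> \<psi>)) (insert m D)
      (\<lambda>j. if j = i then under (Q i) \<union> {(0, m), (m, m)}
           else under (Q j) \<union> {(0, -1)} \<union> {(m, k) | k. (0, k) \<in> Q j})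
      (P(m := \<xi>))"
| conj: "dbi_normal \<psi> \<Longrightarrow> dbi_normal \<theta> \<Longrightarrow> mkU \<psi> D1 Q1 P1 \<Longrightarrow> mkU \<theta> D2 Q2 P2 \<Longrightarrow>
    D1 \<inter> D2 = {} \<Longrightarrow>
    mkU (Conj \<psi> \<theta>) (D1 \<union> D2)
      (\<lambda>j. under (Q1 j) \<union> under (Q2 j)
           \<union> {(0, k) | k. (0, k) \<in> Q1 j \<union> Q2 j \<and> k \<in> D1 \<union> D2}
           \<union> (if \<exists>k \<in> D1 \<union> D2. (0, k) \<in> Q1 j \<union> Q2 j then {} else {(0, -1)}))
      (\<lambda>k. if k \<in> D1 then P1 k else P2 k)"

definition mk_amodel :: "int set \<Rightarrow> ('ag \<Rightarrow> (int \<times> int) set) \<Rightarrow> (int \<Rightarrow> ('ag, 'p) fm)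
    \<Rightarrow> ('ag, int, 'p) amodel" where
  "mk_amodel D Q P = \<lparr> AE = {0, -1} \<union> D, AQ = Q, Apre = P \<rparr>"

end

theory Submission
  imports Defs
begin

definition FP :: "('ag, 's, 'p) kmodel \<Rightarrow> ('ag, 'e, 'p) amodel \<Rightarrow> ('ag, 's \<times> 'e, 'p) kmodel" where
  "FP M U = \<lparr> St = upd_T M U,
     Rel = (\<lambda>i. {((x, \<beta>), (u, \<gamma>)). (u, \<gamma>) \<in> upd_T M U \<and> (x, u) \<in> Rel M i \<and> (\<beta>, \<gamma>) \<in> AQ U i}),
     Val = (\<lambda>p. {(x, \<beta>). x \<in> Val M p}) \<rparr>"

lemma sat_top[simp]: "sat N w top"
  by (simp add: top_def)

lemma upd_states_T0: "(x, b) \<in> upd_states M U w \<alpha> \<Longrightarrow> (x, b) \<in> upd_T M U"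
  by (induction rule: upd_states.induct) auto

lemma upd_states_T: "s \<in> upd_states M U w \<alpha> \<Longrightarrow> s \<in> upd_T M U"
  by (metis prod.exhaust upd_states_T0)

lemma sat_upd_FP:
  "s \<in> upd_states M U w \<alpha> \<Longrightarrow> sat (upd M U w \<alpha>) s f = sat (FP M U) s f"
proof (induction f arbitrary: s)
  case (Bel i f)
  obtain x \<beta> where s: "s = (x, \<beta>)" by (cases s)
  have "\<And>u \<gamma>. ((x,\<beta>),(u,\<gamma>)) \<in> Rel (upd M U w \<alpha>) i \<longleftrightarrow> ((x,\<beta>),(u,\<gamma>)) \<in> Rel (FP M U) i"
    using Bel.prems s by (auto simp: upd_def FP_def intro: upd_states.step dest: upd_states_T)
  moreover have "\<And>u \<gamma>. ((x,\<beta>),(u,\<gamma>)) \<in> Rel (FP M U) i \<Longrightarrow> (u,\<gamma>) \<in> upd_states M U w \<alpha>"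
    using Bel.prems s by (auto simp: FP_def intro: upd_states.step)
  ultimately show ?case using Bel.IH s by auto
qed (auto simp: upd_def FP_def)

lemma sat_prop_FP: "propositional f \<Longrightarrow> sat (FP M U) (x, e) f = sat M x f"
  by (induction f) (auto simp: FP_def)

lemma sat_local:
  assumes "\<forall>p. (s \<in> Val N p) = (s' \<in> Val N' p)"
    and "\<forall>j\<in>ta f. \<forall>t. ((s,t) \<in> Rel N j) = ((s',t) \<in> Rel N' j)"
    and "\<forall>j\<in>ta f. \<forall>t g. (s,t) \<in> Rel N j \<longrightarrow> sat N t g = sat N' t g"
  shows "sat N s f = sat N' s' f"
  using assms
proof (induction f)
  case (Neg f)
  then show ?case by simp
next
  case (Conj f1 f2)
  then show ?case by (metis UnCI sat.simps(3) ta.simps(3))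
qed auto

lemma sat_agree:
  assumes cl: "\<forall>e\<in>S. \<forall>j. AQ U j `` {e} = AQ U' j `` {e} \<and> AQ U' j `` {e} \<subseteq> S"
    and pre: "\<forall>e\<in>S. Apre U e = Apre U' e"
    and "S \<subseteq> AE U" "S \<subseteq> AE U'"
  shows "e \<in> S \<Longrightarrow> sat (FP M U) (x, e) f = sat (FP M U') (x, e) f"
proof (induction f arbitrary: x e)
  case (Bel i f)
  have "\<And>u \<gamma>. ((x,e),(u,\<gamma>)) \<in> Rel (FP M U) i \<longleftrightarrow> ((x,e),(u,\<gamma>)) \<in> Rel (FP M U') i"
  proof -
    fix u \<gamma>
    have a: "((e, \<gamma>) \<in> AQ U i) = ((e,\<gamma>) \<in> AQ U' i)" using cl Bel.prems by blast
    have b: "(e,\<gamma>) \<in> AQ U' i \<Longrightarrow> \<gamma> \<in> S" using cl Bel.prems by blast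
    show "?thesis u \<gamma>" using a b pre assms(3,4) by (auto simp: FP_def upd_T_def)
  qed
  moreover have "\<And>u \<gamma>. ((x,e),(u,\<gamma>)) \<in> Rel (FP M U') i \<Longrightarrow> \<gamma> \<in> S"
    using cl Bel.prems by (auto simp: FP_def)
  ultimately show ?case using Bel.IH by (auto simp del: sat.simps simp: sat.simps(4))
qed (auto simp: FP_def)

lemma shift:
  fixes M :: "('ag, 's, 'p) kmodel" and U U' :: "('ag, 'e, 'p) amodel"
  assumes h: "sat (FP M U') (u, e') f"
    and cl: "\<forall>e\<in>S. \<forall>j. AQ U j `` {e} = AQ U' j `` {e} \<and> AQ U' j `` {e} \<subseteq> S"
    and pre: "\<forall>e\<in>S. Apre U e = Apre U' e"
    and "S \<subseteq> AE U" "S \<subseteq> AE U'"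
    and r: "\<forall>j\<in>ta f. AQ U j `` {e} = AQ U' j `` {e'} \<and> AQ U' j `` {e'} \<subseteq> S"
  shows "sat (FP M U) (u, e) f"
proof -
  have "sat (FP M U) (u, e) f = sat (FP M U') (u, e') f"
  proof (rule sat_local)
    show "\<forall>p. ((u, e) \<in> Val (FP M U) p) = ((u, e') \<in> Val (FP M U') p)" by (simp add: FP_def)
    show "\<forall>j\<in>ta f. \<forall>t. (((u, e), t) \<in> Rel (FP M U) j) = (((u, e'), t) \<in> Rel (FP M U') j)"
    proof (intro ballI allI)
      fix j and t :: "'s \<times> 'e" assume j: "j \<in> ta f"
      obtain u' \<gamma> where t: "t = (u', \<gamma>)" by (cases t)
      have rj: "AQ U j `` {e} = AQ U' j `` {e'}" "AQ U' j `` {e'} \<subseteq> S" using r j by auto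
      have a: "((e, \<gamma>) \<in> AQ U j) = ((e',\<gamma>) \<in> AQ U' j)"
        using rj(1) by (metis Image_singleton_iff)
      have b: "(e',\<gamma>) \<in> AQ U' j \<Longrightarrow> \<gamma> \<in> S" using rj(2) by auto
      show "(((u, e), t) \<in> Rel (FP M U) j) = (((u, e'), t) \<in> Rel (FP M U') j)"
        using a b pre assms(4,5) t by (auto simp: FP_def upd_T_def)
    qed
    show "\<forall>j\<in>ta f. \<forall>t g. ((u, e), t) \<in> Rel (FP M U) j \<longrightarrow> sat (FP M U) t g = sat (FP M U') t g"
    proof (intro ballI allI impI)
      fix j g and t :: "'s \<times> 'e" assume j: "j \<in> ta f" and "((u, e), t) \<in> Rel (FP M U) j"
      then obtain u' \<gamma> where t: "t = (u', \<gamma>)" and "(e,\<gamma>) \<in> AQ U j" by (auto simp: FP_def)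
      have rj: "AQ U j `` {e} = AQ U' j `` {e'}" "AQ U' j `` {e'} \<subseteq> S" using r j by auto
      have "\<gamma> \<in> S" using rj \<open>(e,\<gamma>) \<in> AQ U j\<close> by auto
      from sat_agree[OF cl pre assms(4,5) this] show "sat (FP M U) t g = sat (FP M U') t g"
        unfolding t .
    qed
  qed
  then show ?thesis using h by simp
qed

definition invU :: "('ag, 'p) fm \<Rightarrow> int set \<Rightarrow> ('ag \<Rightarrow> (int \<times> int) set) \<Rightarrow> (int \<Rightarrow> ('ag, 'p) fm) \<Rightarrow> bool" where
  "invU \<phi> D Q P \<longleftrightarrow> finite D \<and> (\<forall>k\<in>D. 1 \<le> k) \<and> P 0 = top \<and> P (-1) = top
     \<and> (\<forall>j. Q j \<subseteq> (insert 0 (insert (-1) D)) \<times> insert (-1) D)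
     \<and> (\<forall>j. Q j `` {-1} = {-1})
     \<and> (\<forall>j\<in>ta \<phi>. Q j `` {0} \<subseteq> D \<and> Q j `` {0} \<noteq> {})
     \<and> (\<forall>j. j \<notin> ta \<phi> \<longrightarrow> Q j `` {0} = {-1})"

lemma under_Image: "under R `` {e} = (if e = 0 then {} else R `` {e} - {0})"
  by (auto simp: under_def)

lemma under_sub: "under R \<subseteq> R"
  by (auto simp: under_def)

lemma under_mem[simp]: "((a, b) \<in> under R) = ((a, b) \<in> R \<and> a \<noteq> 0 \<and> b \<noteq> 0)"
  by (auto simp: under_def)

lemma inv_bel:
  assumes h: "invU \<psi> D Q P" and m: "1 \<le> m" "m \<notin> D"
  shows "invU (Bel i \<chi>) (insert m D)
      (\<lambda>j. if j = i then under (Q i) \<union> {(0, m), (m, m)}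
           else under (Q j) \<union> {(0, -1)} \<union> {(m, k) | k. (0, k) \<in> Q j})
      (P(m := \<pi>))"
proof -
  from h have fin: "finite D" and pos: "\<forall>k\<in>D. 1 \<le> k" and p0: "P 0 = top" "P (-1) = top"
    and sub: "\<And>j. Q j \<subseteq> (insert 0 (insert (-1) D)) \<times> insert (-1) D"
    and m1: "\<And>j. Q j `` {-1} = {-1}"
    by (auto simp: invU_def)
  have m1': "\<And>j x. ((-1, x) \<in> Q j) = (x = -1)" using m1 by blast
  have q0: "\<And>j a b. (a, b) \<in> Q j \<Longrightarrow> a \<in> insert 0 (insert (-1) D) \<and> b \<in> insert (-1) D"
    using sub by blast
  let ?Q = "(\<lambda>j. if j = i then under (Q i) \<union> {(0, m), (m, m)}
           else under (Q j) \<union> {(0, -1)} \<union> {(m, k) | k. (0, k) \<in> Q j})"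
  have s1: "?Q j \<subseteq> (insert 0 (insert (-1) (insert m D))) \<times> insert (-1) (insert m D)" for j
  proof
    fix z assume z: "z \<in> ?Q j"
    obtain a b where ab: "z = (a, b)" by (cases z)
    show "z \<in> (insert 0 (insert (-1) (insert m D))) \<times> insert (-1) (insert m D)"
    proof -
      have "(a, b) \<in> Q j \<or> (a, b) \<in> {(0, m), (m, m)} \<or> (a, b) = (0, -1) \<or> (a = m \<and> (0, b) \<in> Q j)"
        using z unfolding ab by (cases "j = i") (simp_all, blast+)
      then show ?thesis unfolding ab using q0[where a=a and b=b and j=j] q0[where a=0 and b=b and j=j]
        by blast
    qed
  qed
  have s2: "?Q j `` {-1} = {-1}" for j
  proof -
    have "x \<in> ?Q j `` {-1} \<longleftrightarrow> x = -1" for x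
      using m1'[where j=j and x=x] m by (cases "j = i", auto)
    then show ?thesis by blast
  qed
  have s3: "?Q i `` {0} = {m}"
    by auto
  have s4: "j \<noteq> i \<Longrightarrow> ?Q j `` {0} = {-1}" for j
    using m by auto
  show ?thesis unfolding invU_def using fin pos p0 m s1 s2 s3 s4 by auto
qed

definition Qc :: "('ag \<Rightarrow> (int \<times> int) set) \<Rightarrow> ('ag \<Rightarrow> (int \<times> int) set) \<Rightarrow> int set \<Rightarrow> int set \<Rightarrow> 'ag \<Rightarrow> (int \<times> int) set" where
  "Qc Q1 Q2 D1 D2 = (\<lambda>j. under (Q1 j) \<union> under (Q2 j)
           \<union> {(0, k) | k. (0, k) \<in> Q1 j \<union> Q2 j \<and> k \<in> D1 \<union> D2}
           \<union> (if \<exists>k \<in> D1 \<union> D2. (0, k) \<in> Q1 j \<union> Q2 j then {} else {(0, -1)}))"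

lemma Qc_mem: "((a, b) \<in> Qc Q1 Q2 D1 D2 j) \<longleftrightarrow>
   ((a, b) \<in> Q1 j \<and> a \<noteq> 0 \<and> b \<noteq> 0) \<or> ((a, b) \<in> Q2 j \<and> a \<noteq> 0 \<and> b \<noteq> 0)
   \<or> (a = 0 \<and> ((0, b) \<in> Q1 j \<or> (0, b) \<in> Q2 j) \<and> b \<in> D1 \<union> D2)
   \<or> (a = 0 \<and> b = -1 \<and> \<not> (\<exists>k\<in>D1 \<union> D2. (0, k) \<in> Q1 j \<or> (0, k) \<in> Q2 j))"
  unfolding Qc_def by auto

lemma Qc_sym: "Qc Q1 Q2 D1 D2 = Qc Q2 Q1 D2 D1"
proof (rule ext, rule set_eqI)
  fix j and z :: "int \<times> int"
  obtain a b where z: "z = (a, b)" by (cases z)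
  show "(z \<in> Qc Q1 Q2 D1 D2 j) = (z \<in> Qc Q2 Q1 D2 D1 j)"
    unfolding z Qc_mem by blast
qed

lemma inv_conj:
  assumes h1: "invU \<psi> D1 Q1 P1" and h2: "invU \<theta> D2 Q2 P2" and d: "D1 \<inter> D2 = {}"
  shows "invU (Conj \<psi> \<theta>) (D1 \<union> D2) (Qc Q1 Q2 D1 D2)
      (\<lambda>k. if k \<in> D1 then P1 k else P2 k)"
proof -
  let ?Q = "Qc Q1 Q2 D1 D2"
  from h1 have fin1: "finite D1" and pos1: "\<forall>k\<in>D1. 1 \<le> k" and p1: "P1 0 = top" "P1 (-1) = top"
    and sub1: "\<And>j. Q1 j \<subseteq> (insert 0 (insert (-1) D1)) \<times> insert (-1) D1"
    and m1: "\<And>j. Q1 j `` {-1} = {-1}"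
    and ta1: "\<And>j. j \<in> ta \<psi> \<Longrightarrow> Q1 j `` {0} \<subseteq> D1 \<and> Q1 j `` {0} \<noteq> {}"
    and nta1: "\<And>j. j \<notin> ta \<psi> \<Longrightarrow> Q1 j `` {0} = {-1}"
    by (auto simp: invU_def)
  from h2 have fin2: "finite D2" and pos2: "\<forall>k\<in>D2. 1 \<le> k" and p2: "P2 0 = top" "P2 (-1) = top"
    and sub2: "\<And>j. Q2 j \<subseteq> (insert 0 (insert (-1) D2)) \<times> insert (-1) D2"
    and m2: "\<And>j. Q2 j `` {-1} = {-1}"
    and ta2: "\<And>j. j \<in> ta \<theta> \<Longrightarrow> Q2 j `` {0} \<subseteq> D2 \<and> Q2 j `` {0} \<noteq> {}"
    and nta2: "\<And>j. j \<notin> ta \<theta> \<Longrightarrow> Q2 j `` {0} = {-1}"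
    by (auto simp: invU_def)
  have n1: "0 \<notin> D1" "-1 \<notin> D1" "0 \<notin> D2" "-1 \<notin> D2" using pos1 pos2 by force+
  have q1: "\<And>j a b. (a, b) \<in> Q1 j \<Longrightarrow> a \<in> insert 0 (insert (-1) D1) \<and> b \<in> insert (-1) D1"
    using sub1 by blast
  have q2: "\<And>j a b. (a, b) \<in> Q2 j \<Longrightarrow> a \<in> insert 0 (insert (-1) D2) \<and> b \<in> insert (-1) D2"
    using sub2 by blast
  have m1': "\<And>j x. ((-1, x) \<in> Q1 j) = (x = -1)" using m1 by blast
  have m2': "\<And>j x. ((-1, x) \<in> Q2 j) = (x = -1)" using m2 by blast
  have s1: "?Q j \<subseteq> (insert 0 (insert (-1) (D1 \<union> D2))) \<times> insert (-1) (D1 \<union> D2)" for j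
  proof
    fix z assume z: "z \<in> ?Q j"
    obtain a b where ab: "z = (a, b)" by (cases z)
    show "z \<in> (insert 0 (insert (-1) (D1 \<union> D2))) \<times> insert (-1) (D1 \<union> D2)"
      using z unfolding ab Qc_mem
      using q1[where a=a and b=b and j=j] q2[where a=a and b=b and j=j] by blast
  qed
  have s2: "?Q j `` {-1} = {-1}" for j
  proof -
    have "x \<in> ?Q j `` {-1} \<longleftrightarrow> x = -1" for x
      unfolding Image_singleton_iff Qc_mem using m1'[where j=j and x=x] m2'[where j=j and x=x] by auto
    then show ?thesis by blast
  qed
  have s3: "?Q j `` {0} \<subseteq> D1 \<union> D2 \<and> ?Q j `` {0} \<noteq> {}" if j: "j \<in> ta \<psi> \<union> ta \<theta>" for j
  proof -
    have ex: "\<exists>k \<in> D1 \<union> D2. (0, k) \<in> Q1 j \<or> (0, k) \<in> Q2 j"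
      using j ta1[of j] ta2[of j] by blast
    have "x \<in> ?Q j `` {0} \<longleftrightarrow> ((0, x) \<in> Q1 j \<or> (0, x) \<in> Q2 j) \<and> x \<in> D1 \<union> D2" for x
      unfolding Image_singleton_iff Qc_mem using ex by simp
    then show ?thesis using ex by blast
  qed
  have s4: "?Q j `` {0} = {-1}" if j: "j \<notin> ta \<psi> \<union> ta \<theta>" for j
  proof -
    have a: "Q1 j `` {0} = {-1}" "Q2 j `` {0} = {-1}" using j nta1 nta2 by auto
    then have a': "\<And>x. ((0, x) \<in> Q1 j) = (x = -1)" "\<And>x. ((0, x) \<in> Q2 j) = (x = -1)" by blast+
    have ex: "\<not> (\<exists>k \<in> D1 \<union> D2. (0, k) \<in> Q1 j \<or> (0, k) \<in> Q2 j)" using n1 a' by auto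
    have "x \<in> ?Q j `` {0} \<longleftrightarrow> x = -1" for x
      unfolding Image_singleton_iff Qc_mem using ex a' n1 by auto
    then show ?thesis by blast
  qed
  have fin: "finite (D1 \<union> D2)" using fin1 fin2 by simp
  have pos: "\<forall>k\<in>D1 \<union> D2. 1 \<le> k" using pos1 pos2 by blast
  have pp: "(\<lambda>k. if k \<in> D1 then P1 k else P2 k) 0 = top" "(\<lambda>k. if k \<in> D1 then P1 k else P2 k) (-1) = top"
    using n1 p1 p2 by auto
  have s34: "\<forall>j\<in>ta (Conj \<psi> \<theta>). ?Q j `` {0} \<subseteq> D1 \<union> D2 \<and> ?Q j `` {0} \<noteq> {}"
    using s3 by simp
  have s44: "\<forall>j. j \<notin> ta (Conj \<psi> \<theta>) \<longrightarrow> ?Q j `` {0} = {-1}"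
    using s4 by simp
  show ?thesis unfolding invU_def
    using fin pos pp s1 s2 s34 s44 by blast
qed

lemma mkU_inv: "mkU \<phi> D Q P \<Longrightarrow> invU \<phi> D Q P"
proof (induction rule: mkU.induct)
  case (ubase \<xi> m i)
  then show ?case unfolding invU_def by (auto simp: Image_def)
next
  case (bel \<psi> D Q P m i)
  show ?case by (rule inv_bel[OF bel.IH bel(3) bel(4)])
next
  case (belc \<xi> \<psi> D Q P m i)
  show ?case by (rule inv_bel[OF belc.IH belc(4) belc(5)])
next
  case (conj \<psi> \<theta> D1 Q1 P1 D2 Q2 P2)
  then show ?case using inv_conj[OF conj.IH conj.hyps(5)] unfolding Qc_def by simp
qed

lemma dbi_not_prop: "dbi_normal f \<Longrightarrow> \<not> propositional f"
  by (induction rule: dbi_normal.induct) auto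

lemma prop_ta: "propositional f \<Longrightarrow> ta f = {}"
  by (induction f) auto

lemma bel_ta: "dbi_normal (Bel i \<psi>) \<Longrightarrow> dbi_normal \<psi> \<Longrightarrow> i \<notin> ta \<psi>"
  by (cases rule: dbi_normal.cases) (auto simp: prop_ta dbi_not_prop)

lemma conj_ta: "dbi_normal (Conj \<psi> \<theta>) \<Longrightarrow> ta \<psi> \<inter> ta \<theta> = {}"
  by (cases rule: dbi_normal.cases) auto

lemma mk_simps[simp]: "AE (mk_amodel D Q P) = {0, -1} \<union> D" "AQ (mk_amodel D Q P) = Q"
  "Apre (mk_amodel D Q P) = P"
  by (auto simp: mk_amodel_def)

lemma bel_truth:
  fixes M :: "('ag, 's, 'p) kmodel"
  assumes h: "invU \<psi> D Q P" and m: "1 \<le> m" "m \<notin> D" and i: "i \<notin> ta \<psi>"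
    and IH: "\<forall>u\<in>St M. sat (FP M (mk_amodel D Q P)) (u, 0) \<psi>"
    and rel: "((x, 0), (u, \<gamma>)) \<in> Rel (FP M (mk_amodel (insert m D)
      (\<lambda>j. if j = i then under (Q i) \<union> {(0, m), (m, m)}
           else under (Q j) \<union> {(0, -1)} \<union> {(m, k) | k. (0, k) \<in> Q j})
      (P(m := \<pi>)))) i"
  shows "\<gamma> = m \<and> sat M u \<pi> \<and> sat (FP M (mk_amodel (insert m D)
      (\<lambda>j. if j = i then under (Q i) \<union> {(0, m), (m, m)}
           else under (Q j) \<union> {(0, -1)} \<union> {(m, k) | k. (0, k) \<in> Q j})
      (P(m := \<pi>)))) (u, m) \<psi>"
proof -
  let ?Q = "(\<lambda>j. if j = i then under (Q i) \<union> {(0, m), (m, m)}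
           else under (Q j) \<union> {(0, -1)} \<union> {(m, k) | k. (0, k) \<in> Q j})"
  let ?U = "mk_amodel (insert m D) ?Q (P(m := \<pi>))"
  let ?U' = "mk_amodel D Q P"
  from h have pos: "\<forall>k\<in>D. 1 \<le> k"
    and sub: "\<And>j. Q j \<subseteq> (insert 0 (insert (-1) D)) \<times> insert (-1) D"
    by (auto simp: invU_def)
  from rel have T: "(u, \<gamma>) \<in> upd_T M ?U" and q: "(0, \<gamma>) \<in> ?Q i"
    by (auto simp: FP_def)
  from q have g: "\<gamma> = m" by (auto simp: under_def)
  from T g have u: "u \<in> St M" and pi: "sat M u \<pi>" by (auto simp: upd_T_def)
  have n0: "0 \<notin> D" "-1 \<notin> D" using pos by force+
  let ?S = "insert (-1) D"
  have Qe: "Q j `` {e} \<subseteq> ?S" for j e using sub[of j] by auto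
  have Qm: "Q j `` {m} = {}" for j using sub[of j] m by auto
  have "sat (FP M ?U) (u, m) \<psi>"
  proof (rule shift[where S = ?S])
    show "sat (FP M ?U') (u, 0) \<psi>" using IH u by blast
    show "\<forall>e\<in>?S. \<forall>j. AQ ?U j `` {e} = AQ ?U' j `` {e} \<and> AQ ?U' j `` {e} \<subseteq> ?S"
    proof (intro ballI allI conjI)
      fix e j assume e: "e \<in> ?S"
      then have "e \<noteq> 0" "e \<noteq> m" using n0 m by auto
      moreover have "0 \<notin> Q j `` {e}" using Qe[of j e] n0 by auto
      ultimately show "AQ ?U j `` {e} = AQ ?U' j `` {e}"
        by (auto simp: under_Image)
      show "AQ ?U' j `` {e} \<subseteq> ?S" using Qe by simp
    qed
    show "\<forall>e\<in>?S. Apre ?U e = Apre ?U' e" using m n0 by auto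
    show "?S \<subseteq> AE ?U" by auto
    show "?S \<subseteq> AE ?U'" by auto
    show "\<forall>j\<in>ta \<psi>. AQ ?U j `` {m} = AQ ?U' j `` {0} \<and> AQ ?U' j `` {0} \<subseteq> ?S"
    proof (intro ballI conjI)
      fix j assume j: "j \<in> ta \<psi>"
      then have "j \<noteq> i" using i by auto
      then show "AQ ?U j `` {m} = AQ ?U' j `` {0}" using Qm[of j] m by (auto simp: under_Image)
      show "AQ ?U' j `` {0} \<subseteq> ?S" using Qe by simp
    qed
  qed
  then show ?thesis using g pi by simp
qed

lemma conj_truth:
  fixes M :: "('ag, 's, 'p) kmodel"
  assumes h1: "invU \<psi> D1 Q1 P1" and h2: "invU \<theta> D2 Q2 P2" and d: "D1 \<inter> D2 = {}"
    and t: "ta \<psi> \<inter> ta \<theta> = {}"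
    and pe: "\<forall>k\<in>insert (-1) D1. P k = P1 k"
    and IH: "sat (FP M (mk_amodel D1 Q1 P1)) (x, 0) \<psi>"
  shows "sat (FP M (mk_amodel (D1 \<union> D2) (Qc Q1 Q2 D1 D2) P)) (x, 0) \<psi>"
proof -
  let ?U = "mk_amodel (D1 \<union> D2) (Qc Q1 Q2 D1 D2) P"
  let ?U' = "mk_amodel D1 Q1 P1"
  from h1 have pos1: "\<forall>k\<in>D1. 1 \<le> k"
    and sub1: "\<And>j. Q1 j \<subseteq> (insert 0 (insert (-1) D1)) \<times> insert (-1) D1"
    and m1: "\<And>j. Q1 j `` {-1} = {-1}"
    and ta1: "\<And>j. j \<in> ta \<psi> \<Longrightarrow> Q1 j `` {0} \<subseteq> D1 \<and> Q1 j `` {0} \<noteq> {}"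
    by (auto simp: invU_def)
  from h2 have pos2: "\<forall>k\<in>D2. 1 \<le> k"
    and sub2: "\<And>j. Q2 j \<subseteq> (insert 0 (insert (-1) D2)) \<times> insert (-1) D2"
    and m2: "\<And>j. Q2 j `` {-1} = {-1}"
    and nta2: "\<And>j. j \<notin> ta \<theta> \<Longrightarrow> Q2 j `` {0} = {-1}"
    by (auto simp: invU_def)
  have n1: "0 \<notin> D1" "-1 \<notin> D1" "0 \<notin> D2" "-1 \<notin> D2" using pos1 pos2 by force+
  let ?S = "insert (-1) D1"
  have Qe: "Q1 j `` {e} \<subseteq> ?S" for j e using sub1[of j] by auto
  show ?thesis
  proof (rule shift[where S = ?S])
    show "sat (FP M ?U') (x, 0) \<psi>" using IH by blast
    show "\<forall>e\<in>?S. \<forall>j. AQ ?U j `` {e} = AQ ?U' j `` {e} \<and> AQ ?U' j `` {e} \<subseteq> ?S"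
    proof (intro ballI allI conjI)
      fix e j assume e: "e \<in> ?S"
      then have e0: "e \<noteq> 0" using n1 by auto
      have z1: "0 \<notin> Q1 j `` {e}" using Qe[of j e] n1 by auto
      have "Q2 j `` {e} \<subseteq> Q1 j `` {e}"
      proof (cases "e = -1")
        case True then show ?thesis using m1 m2 by simp
      next
        case False
        then have "e \<notin> insert 0 (insert (-1) D2)" using e e0 d by auto
        then have "Q2 j `` {e} = {}" using sub2[of j] by auto
        then show ?thesis by simp
      qed
      then show "AQ ?U j `` {e} = AQ ?U' j `` {e}"
        unfolding mk_simps
      proof (intro set_eqI)
        fix y
        show "(y \<in> Qc Q1 Q2 D1 D2 j `` {e}) = (y \<in> Q1 j `` {e})"
          unfolding Image_singleton_iff Qc_mem using e0 z1 \<open>Q2 j `` {e} \<subseteq> Q1 j `` {e}\<close> by blast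
      qed
      show "AQ ?U' j `` {e} \<subseteq> ?S" using Qe by simp
    qed
    show "\<forall>e\<in>?S. Apre ?U e = Apre ?U' e" using pe by auto
    show "?S \<subseteq> AE ?U" by auto
    show "?S \<subseteq> AE ?U'" by auto
    show "\<forall>j\<in>ta \<psi>. AQ ?U j `` {0} = AQ ?U' j `` {0} \<and> AQ ?U' j `` {0} \<subseteq> ?S"
    proof (intro ballI conjI)
      fix j assume j: "j \<in> ta \<psi>"
      then have "j \<notin> ta \<theta>" using t by auto
      then have a2: "Q2 j `` {0} = {-1}" using nta2 by auto
      have a1: "Q1 j `` {0} \<subseteq> D1" "Q1 j `` {0} \<noteq> {}" using ta1 j by auto
      then have ex: "\<exists>k \<in> D1 \<union> D2. (0, k) \<in> Q1 j \<union> Q2 j" by blast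
      have "Qc Q1 Q2 D1 D2 j `` {0} = {k. (0, k) \<in> Q1 j \<union> Q2 j \<and> k \<in> D1 \<union> D2}"
        unfolding set_eq_iff Image_singleton_iff Qc_mem using ex by auto
      also have "\<dots> = Q1 j `` {0}"
      proof -
        have a2': "\<And>y. ((0, y) \<in> Q2 j) = (y = -1)" using a2 by blast
        show ?thesis using a1 a2' n1 by auto
      qed
      finally show "AQ ?U j `` {0} = AQ ?U' j `` {0}" by simp
      show "AQ ?U' j `` {0} \<subseteq> ?S" using Qe by simp
    qed
  qed
qed

lemma bel_sat1:
  fixes M :: "('ag, 's, 'p) kmodel"
  assumes h: "invU \<psi> D Q P" and m: "1 \<le> m" "m \<notin> D" and i: "i \<notin> ta \<psi>"
    and IH: "\<forall>u\<in>St M. sat (FP M (mk_amodel D Q P)) (u, 0) \<psi>"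
  shows "sat (FP M (mk_amodel (insert m D)
      (\<lambda>j. if j = i then under (Q i) \<union> {(0, m), (m, m)}
           else under (Q j) \<union> {(0, -1)} \<union> {(m, k) | k. (0, k) \<in> Q j})
      (P(m := \<pi>)))) (x, 0) (Bel i \<psi>)"
  unfolding sat.simps(4)
proof (intro allI impI)
  fix s assume rel: "((x, 0), s) \<in> Rel (FP M (mk_amodel (insert m D)
      (\<lambda>j. if j = i then under (Q i) \<union> {(0, m), (m, m)}
           else under (Q j) \<union> {(0, -1)} \<union> {(m, k) | k. (0, k) \<in> Q j})
      (P(m := \<pi>)))) i"
  obtain u \<gamma> where s: "s = (u, \<gamma>)" by (cases s)
  from bel_truth[OF h m i IH rel[unfolded s]] show "sat (FP M (mk_amodel (insert m D)
      (\<lambda>j. if j = i then under (Q i) \<union> {(0, m), (m, m)}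
           else under (Q j) \<union> {(0, -1)} \<union> {(m, k) | k. (0, k) \<in> Q j})
      (P(m := \<pi>)))) s \<psi>" unfolding s by blast
qed

lemma bel_sat2:
  fixes M :: "('ag, 's, 'p) kmodel"
  assumes h: "invU \<psi> D Q P" and m: "1 \<le> m" "m \<notin> D" and i: "i \<notin> ta \<psi>"
    and IH: "\<forall>u\<in>St M. sat (FP M (mk_amodel D Q P)) (u, 0) \<psi>"
    and pr: "propositional \<xi>"
  shows "sat (FP M (mk_amodel (insert m D)
      (\<lambda>j. if j = i then under (Q i) \<union> {(0, m), (m, m)}
           else under (Q j) \<union> {(0, -1)} \<union> {(m, k) | k. (0, k) \<in> Q j})
      (P(m := \<xi>)))) (x, 0) (Bel i (Conj \<xi> \<psi>))"
  unfolding sat.simps(4)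
proof (intro allI impI)
  fix s assume rel: "((x, 0), s) \<in> Rel (FP M (mk_amodel (insert m D)
      (\<lambda>j. if j = i then under (Q i) \<union> {(0, m), (m, m)}
           else under (Q j) \<union> {(0, -1)} \<union> {(m, k) | k. (0, k) \<in> Q j})
      (P(m := \<xi>)))) i"
  obtain u \<gamma> where s: "s = (u, \<gamma>)" by (cases s)
  from bel_truth[OF h m i IH rel[unfolded s]]
  have "\<gamma> = m" "sat M u \<xi>" and c: "sat (FP M (mk_amodel (insert m D)
      (\<lambda>j. if j = i then under (Q i) \<union> {(0, m), (m, m)}
           else under (Q j) \<union> {(0, -1)} \<union> {(m, k) | k. (0, k) \<in> Q j})
      (P(m := \<xi>)))) (u, m) \<psi>" by blast+
  then show "sat (FP M (mk_amodel (insert m D)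
      (\<lambda>j. if j = i then under (Q i) \<union> {(0, m), (m, m)}
           else under (Q j) \<union> {(0, -1)} \<union> {(m, k) | k. (0, k) \<in> Q j})
      (P(m := \<xi>)))) s (Conj \<xi> \<psi>)" unfolding s sat.simps(3) \<open>\<gamma> = m\<close>
    using \<open>sat M u \<xi>\<close> c by (simp add: sat_prop_FP[OF pr])
qed

lemma truth:
  fixes M :: "('ag, 's, 'p) kmodel"
  shows "mkU \<phi> D Q P \<Longrightarrow> dbi_normal \<phi> \<Longrightarrow> kripke M \<Longrightarrow>
    \<forall>x\<in>St M. sat (FP M (mk_amodel D Q P)) (x, 0) \<phi>"
proof (induction rule: mkU.induct)
  case (ubase \<xi> m i)
  show ?case
  proof (intro ballI)
    fix x assume x: "x \<in> St M"
    show "sat (FP M (mk_amodel {m} (\<lambda>j. if j = i then {(0, m), (m, m), (-1, -1)} else {(0, -1), (m, -1), (-1, -1)})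
      ((\<lambda>_. top)(m := \<xi>)))) (x, 0) (Bel i \<xi>)"
      unfolding sat.simps(4)
    proof (intro allI impI)
      fix s assume rel: "((x, 0), s) \<in> Rel (FP M (mk_amodel {m} (\<lambda>j. if j = i then {(0, m), (m, m), (-1, -1)} else {(0, -1), (m, -1), (-1, -1)})
      ((\<lambda>_. top)(m := \<xi>)))) i"
      obtain u \<gamma> where s: "s = (u, \<gamma>)" by (cases s)
      from rel have T: "(u, \<gamma>) \<in> upd_T M (mk_amodel {m} (\<lambda>j. if j = i then {(0, m), (m, m), (-1, -1)} else {(0, -1), (m, -1), (-1, -1)})
      ((\<lambda>_. top)(m := \<xi>)))"
        and q: "(0, \<gamma>) \<in> (if i = i then {(0, m), (m, m), (-1, -1)} else {(0, -1), (m, -1), (-1, -1)})"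
        unfolding s FP_def by auto
      from q have g: "\<gamma> = m" by auto
      from T have "sat M u \<xi>" unfolding g upd_T_def by simp
      then show "sat (FP M (mk_amodel {m} (\<lambda>j. if j = i then {(0, m), (m, m), (-1, -1)} else {(0, -1), (m, -1), (-1, -1)})
      ((\<lambda>_. top)(m := \<xi>)))) s \<xi>" unfolding s by (simp add: sat_prop_FP[OF ubase(1)])
    qed
  qed
next
  case (bel \<psi> D Q P m i)
  have i: "i \<notin> ta \<psi>" using bel_ta[OF bel.prems(1) bel.hyps(1)] .
  have IH: "\<forall>u\<in>St M. sat (FP M (mk_amodel D Q P)) (u, 0) \<psi>" using bel.IH[OF bel.hyps(1) bel.prems(2)] .
  have h: "invU \<psi> D Q P" using mkU_inv[OF bel.hyps(2)] .
  show ?case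
    by (intro ballI) (rule bel_sat1[OF h bel(3,4) i IH])
next
  case (belc \<xi> \<psi> D Q P m i)
  have "dbi_normal (Bel i (Conj \<xi> \<psi>))" using belc.prems(1) .
  then have i: "i \<notin> ta \<psi>"
    by (cases rule: dbi_normal.cases) (auto simp: prop_ta dbi_not_prop belc(1))
  have IH: "\<forall>u\<in>St M. sat (FP M (mk_amodel D Q P)) (u, 0) \<psi>" using belc.IH[OF belc.hyps(2) belc.prems(2)] .
  have h: "invU \<psi> D Q P" using mkU_inv[OF belc.hyps(3)] .
  show ?case
    by (intro ballI) (rule bel_sat2[OF h belc(4,5) i IH belc(1)])
next
  case (conj \<psi> \<theta> D1 Q1 P1 D2 Q2 P2)
  have t: "ta \<psi> \<inter> ta \<theta> = {}" using conj_ta[OF conj.prems(1)] .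
  have t': "ta \<theta> \<inter> ta \<psi> = {}" using t by blast
  have d': "D2 \<inter> D1 = {}" using conj(5) by blast
  have h1: "invU \<psi> D1 Q1 P1" and h2: "invU \<theta> D2 Q2 P2" using mkU_inv[OF conj.hyps(3)] mkU_inv[OF conj.hyps(4)] by blast+
  have n1: "-1 \<notin> D1" "-1 \<notin> D2" using h1 h2 by (force simp: invU_def)+
  have P1e: "P1 (-1) = top" "P2 (-1) = top" using h1 h2 by (auto simp: invU_def)
  let ?P = "\<lambda>k. if k \<in> D1 then P1 k else P2 k"
  have pe1: "\<forall>k\<in>insert (-1) D1. ?P k = P1 k" using n1 P1e by auto
  have pe2: "\<forall>k\<in>insert (-1) D2. ?P k = P2 k" using n1 P1e conj(5) by auto
  have IH1: "\<forall>x\<in>St M. sat (FP M (mk_amodel D1 Q1 P1)) (x, 0) \<psi>" using conj.IH(1)[OF conj.hyps(1) conj.prems(2)] .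
  have IH2: "\<forall>x\<in>St M. sat (FP M (mk_amodel D2 Q2 P2)) (x, 0) \<theta>" using conj.IH(2)[OF conj.hyps(2) conj.prems(2)] .
  have Qeq: "(\<lambda>j. under (Q1 j) \<union> under (Q2 j)
           \<union> {(0, k) | k. (0, k) \<in> Q1 j \<union> Q2 j \<and> k \<in> D1 \<union> D2}
           \<union> (if \<exists>k \<in> D1 \<union> D2. (0, k) \<in> Q1 j \<union> Q2 j then {} else {(0, -1)})) = Qc Q1 Q2 D1 D2"
    by (simp only: Qc_def)
  have eqQ: "Qc Q2 Q1 D2 D1 = Qc Q1 Q2 D1 D2" by (rule Qc_sym)
  have eqD: "D2 \<union> D1 = D1 \<union> D2" by (rule Un_commute)
  show ?case unfolding Qeq
  proof (intro ballI)
    fix x assume x: "x \<in> St M"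
    have a: "sat (FP M (mk_amodel (D1 \<union> D2) (Qc Q1 Q2 D1 D2) ?P)) (x, 0) \<psi>"
      by (rule conj_truth[OF h1 h2 conj.hyps(5) t pe1 IH1[rule_format, OF x]])
    have b: "sat (FP M (mk_amodel (D2 \<union> D1) (Qc Q2 Q1 D2 D1) ?P)) (x, 0) \<theta>"
      by (rule conj_truth[OF h2 h1 d' t' pe2 IH2[rule_format, OF x]])
    show "sat (FP M (mk_amodel (D1 \<union> D2) (Qc Q1 Q2 D1 D2) ?P)) (x, 0) (Conj \<psi> \<theta>)"
      using a b unfolding eqQ eqD sat.simps(3) by blast
  qed
qed

lemma fresh: "finite (A :: int set) \<Longrightarrow> \<exists>m. 1 \<le> m \<and> m \<notin> A"
proof -
  assume f: "finite A"
  let ?M = "Max (insert 1 A)"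
  have f': "finite (insert 1 A)" using f by (rule finite_insert[THEN iffD2])
  have le: "a \<le> ?M" if "a \<in> insert 1 A" for a by (rule Max_ge[OF f' that])
  have "?M + 1 \<notin> A"
  proof
    assume "?M + 1 \<in> A"
    then have "?M + 1 \<le> ?M" using le by blast
    then show False by simp
  qed
  moreover have "1 \<le> ?M + 1" using le[of 1] by simp
  ultimately show ?thesis by blast
qed

lemma exists_mkU: "dbi_normal \<phi> \<Longrightarrow> finite F \<Longrightarrow> \<exists>D Q P. mkU \<phi> D Q P \<and> D \<inter> F = {}"
proof (induction arbitrary: F rule: dbi_normal.induct)
  case (nprop \<xi> i)
  obtain m where m: "1 \<le> m" "m \<notin> F" using fresh[OF nprop.prems] by blast
  have "mkU (Bel i \<xi>) {m}
      (\<lambda>j. if j = i then {(0, m), (m, m), (-1, -1)} else {(0, -1), (m, -1), (-1, -1)})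
      ((\<lambda>_. top)(m := \<xi>))" by (rule mkU.ubase[OF nprop.hyps(1) m(1)])
  moreover have "{m} \<inter> F = {}" using m(2) by blast
  ultimately show ?case by blast
next
  case (bel \<phi> i)
  obtain D Q P where a: "mkU \<phi> D Q P" "D \<inter> F = {}" using bel.IH[OF bel.prems] by blast
  have "finite D" using mkU_inv[OF a(1)] by (simp add: invU_def)
  then obtain m where m: "1 \<le> m" "m \<notin> F \<union> D" using fresh[OF finite_UnI[OF bel.prems \<open>finite D\<close>]] by blast
  have "m \<notin> D" using m(2) by blast
  note r = mkU.bel[OF bel.hyps(1) a(1) m(1) this, of i]
  moreover have "insert m D \<inter> F = {}" using m(2) a(2) by blast
  ultimately show ?case by blast
next
  case (belc \<xi> \<phi> i)
  obtain D Q P where a: "mkU \<phi> D Q P" "D \<inter> F = {}" using belc.IH[OF belc.prems] by blast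
  have "finite D" using mkU_inv[OF a(1)] by (simp add: invU_def)
  then obtain m where m: "1 \<le> m" "m \<notin> F \<union> D" using fresh[OF finite_UnI[OF belc.prems \<open>finite D\<close>]] by blast
  have "m \<notin> D" using m(2) by blast
  note r = mkU.belc[OF belc.hyps(1,2) a(1) m(1) this, of i]
  moreover have "insert m D \<inter> F = {}" using m(2) a(2) by blast
  ultimately show ?case by blast
next
  case (conj \<phi> \<psi>)
  obtain D1 Q1 P1 where a: "mkU \<phi> D1 Q1 P1" "D1 \<inter> F = {}" using conj.IH(1)[OF conj.prems] by blast
  have "finite D1" using mkU_inv[OF a(1)] by (simp add: invU_def)
  then obtain D2 Q2 P2 where b: "mkU \<psi> D2 Q2 P2" "D2 \<inter> (F \<union> D1) = {}"
    using conj.IH(2)[OF finite_UnI[OF conj.prems \<open>finite D1\<close>]] by blast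
  have "D1 \<inter> D2 = {}" using b(2) by blast
  note r = mkU.conj[OF conj.hyps(1,2) a(1) b(1) this]
  moreover have "(D1 \<union> D2) \<inter> F = {}" using a(2) b(2) by blast
  ultimately show ?case by blast
qed

theorem theorem4:
  fixes M :: "('ag :: finite, 's, 'p) kmodel" and v :: 's and \<phi> :: "('ag, 'p) fm"
  assumes "2 \<le> CARD('ag)"
    and "kripke M" and "v \<in> St M"
    and "dbi_normal \<phi>"
  shows "(\<exists>D Q P. mkU \<phi> D Q P) \<and>
         (\<forall>D Q P. mkU \<phi> D Q P \<longrightarrow>
            upd_defined M (mk_amodel D Q P) v 0 \<and>
            sat (upd M (mk_amodel D Q P) v 0) (v, 0) \<phi>)"
proof
  show "\<exists>D Q P. mkU \<phi> D Q P" using exists_mkU[OF assms(4) finite.emptyI] by blast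
  show "\<forall>D Q P. mkU \<phi> D Q P \<longrightarrow>
            upd_defined M (mk_amodel D Q P) v 0 \<and>
            sat (upd M (mk_amodel D Q P) v 0) (v, 0) \<phi>"
  proof (intro allI impI)
    fix D Q P assume mk: "mkU \<phi> D Q P"
    have P0: "P 0 = top" using mkU_inv[OF mk] by (simp add: invU_def)
    have d: "upd_defined M (mk_amodel D Q P) v 0" using P0 by (simp add: upd_defined_def)
    have "(v, 0) \<in> upd_T M (mk_amodel D Q P)" using P0 assms(3) by (simp add: upd_T_def)
    then have st: "(v, 0) \<in> upd_states M (mk_amodel D Q P) v 0" by (rule upd_states.base)
    have s1: "sat (FP M (mk_amodel D Q P)) (v, 0) \<phi>"
      by (rule truth[OF mk assms(4,2), rule_format, OF assms(3)])
    have s2: "sat (upd M (mk_amodel D Q P) v 0) (v, 0) \<phi> = sat (FP M (mk_amodel D Q P)) (v, 0) \<phi>"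
      by (rule sat_upd_FP[OF st])
    show "upd_defined M (mk_amodel D Q P) v 0 \<and> sat (upd M (mk_amodel D Q P) v 0) (v, 0) \<phi>"
      using d s1 s2 by blast
  qed
qed

end
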